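(* Assume the setting described in the context and that Condition D holds. Then there is a constant $C$ such that for all $n\in\mathbb N$, \[ \|\bar\zeta_{n,\mathbf 0}-\bar Z_{n,\mathbf 0}\|_2\le C\Big[\Big(\frac{B_{m_n}}{b_n}\Big)^{1/2}+b_n^{1/2}\Big]. \]
   Context: Let $d\in\mathbb N$. For $i,k\in\mathbb Z^d$ write $i\succeq k$ if $i_\tau\ge k_\tau$ for all $\tau$; $\mathbf 0=(0,\dots,0)$, $|i|_\infty=\max_\tau|i_\tau|$, $[\![a,b]\!]=\{a,\dots,b\}$. Let $(\epsilon_i)_{i\in\mathbb Z^d}$ be i.i.d. real random variables with mean zero and finite second moment, $(a_k)_{k\succeq\mathbf 0}$ real with $\sum a_k^2<\infty$, and $X_i=\sum_{k\succeq\mathbf 0}a_k\epsilon_{i-k}$. $K$ is a bounded Lipschitz probability density on $\mathbb R$; $b_n>0$, $b_n\to0$, $n^db_n\to\infty$. $(m_n)$ is a sequence of positive integers; for $m\in\mathbb N$, $X_{i,m}=\sum_{k\in[\![0,m-1]\!]^d}a_k\epsilon_{i-k}$. $p,p_m$ are the densities of $X_{\mathbf 0},X_{\mathbf 0,m}$; $p_i,p_{i,m}$ ($i\ne\mathbf 0$) the joint densities of $(X_{\mathbf 0},X_i)$, $(X_{\mathbf 0,m},X_{i,m})$. Condition D: (i) $p$ and all $p_m$ exist, are Lipschitz with a common constant independent of $m$, and $\sup_xp(x)<\infty$, $\sup_m\sup_xp_m(x)<\infty$; (ii) $p_i,p_{i,m}$ exist for all $i\ne\mathbf 0,m$ and $\sup_{i\ne\mathbf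 0}\sup_{x,y}p_i<\infty$, $\sup_m\sup_{i\ne\mathbf 0}\sup_{x,y}p_{i,m}<\infty$. $B_m=(\sum_{i\succeq\mathbf 0,|i|_\infty\ge m}a_i^2)^{1/2}$. Fix $x\in\mathbb R$; $Z_{n,\mathbf 0}=b_n^{-1/2}K((x-X_{\mathbf 0})/b_n)$, $\zeta_{n,\mathbf 0}=b_n^{-1/2}K((x-X_{\mathbf 0,m_n})/b_n)$, $\bar Z_{n,\mathbf 0}=Z_{n,\mathbf 0}-\mathbb EZ_{n,\mathbf 0}$, $\bar\zeta_{n,\mathbf 0}=\zeta_{n,\mathbf 0}-\mathbb E\zeta_{n,\mathbf 0}$. *)

theory Defs
  imports "HOL-Probability.Probability"
begin

text \<open>Lattice indices: Z^d is rendered as functions 'd => int with 'd a finite type, d = CARD('d).\<close>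

definition nonneg_idx :: "('d::finite \<Rightarrow> int) \<Rightarrow> bool" where
  "nonneg_idx k \<longleftrightarrow> (\<forall>\<tau>. 0 \<le> k \<tau>)"

definition sup_norm_idx :: "('d::finite \<Rightarrow> int) \<Rightarrow> int" where
  "sup_norm_idx i = Max (range (\<lambda>\<tau>. \<bar>i \<tau>\<bar>))"

definition box_idx :: "nat \<Rightarrow> ('d::finite \<Rightarrow> int) set" where
  "box_idx m = {k. \<forall>\<tau>. 0 \<le> k \<tau> \<and> k \<tau> \<le> int m - 1}"

definition X_trunc ::
  "(('d::finite \<Rightarrow> int) \<Rightarrow> 'a \<Rightarrow> real) \<Rightarrow> (('d \<Rightarrow> int) \<Rightarrow> real) \<Rightarrow> nat \<Rightarrow> ('d \<Rightarrow> int) \<Rightarrow> 'a \<Rightarrow> real" where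
  "X_trunc eps a m i \<omega> = (\<Sum>k\<in>box_idx m. a k * eps (\<lambda>\<tau>. i \<tau> - k \<tau>) \<omega>)"

definition B_tail :: "(('d::finite \<Rightarrow> int) \<Rightarrow> real) \<Rightarrow> nat \<Rightarrow> real" where
  "B_tail a m = sqrt (infsum (\<lambda>k. (a k)\<^sup>2) {k. nonneg_idx k \<and> sup_norm_idx k \<ge> int m})"

definition L2_norm :: "'a measure \<Rightarrow> ('a \<Rightarrow> real) \<Rightarrow> real" where
  "L2_norm M f = sqrt (integral\<^sup>L M (\<lambda>\<omega>. (f \<omega>)\<^sup>2))"

end

theory Submission
  imports Defs
begin


context prob_space begin

lemma cs_real:
  fixes u v :: "'a \<Rightarrow> real"
  assumes [measurable]: "u \<in> borel_measurable M" "v \<in> borel_measurable M"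
    and iu: "integrable M (\<lambda>\<omega>. (u \<omega>)\<^sup>2)" and iv: "integrable M (\<lambda>\<omega>. (v \<omega>)\<^sup>2)"
  shows "integrable M (\<lambda>\<omega>. u \<omega> * v \<omega>)"
    and "(\<integral>\<omega>. \<bar>u \<omega> * v \<omega>\<bar> \<partial>M) \<le> sqrt (\<integral>\<omega>. (u \<omega>)\<^sup>2 \<partial>M) * sqrt (\<integral>\<omega>. (v \<omega>)\<^sup>2 \<partial>M)"
proof -
  have ib: "integrable M (\<lambda>\<omega>. ((u \<omega>)\<^sup>2 + (v \<omega>)\<^sup>2) / 2)"
    using iu iv by auto
  show iuv: "integrable M (\<lambda>\<omega>. u \<omega> * v \<omega>)"
  proof (rule Bochner_Integration.integrable_bound[OF ib])
    show "AE x in M. norm (u x * v x) \<le> norm (((u x)\<^sup>2 + (v x)\<^sup>2) / 2)"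
    proof (intro AE_I2)
      fix x
      have "2 * \<bar>u x * v x\<bar> \<le> (u x)\<^sup>2 + (v x)\<^sup>2"
        using sum_squares_bound[of "\<bar>u x\<bar>" "\<bar>v x\<bar>"] by (simp add: abs_mult mult.assoc)
      then show "norm (u x * v x) \<le> norm (((u x)\<^sup>2 + (v x)\<^sup>2) / 2)" by simp
    qed
  qed simp
  have e1: "(\<integral>\<^sup>+\<omega>. ennreal \<bar>u \<omega>\<bar> * ennreal \<bar>v \<omega>\<bar> \<partial>M) = ennreal (\<integral>\<omega>. \<bar>u \<omega> * v \<omega>\<bar> \<partial>M)"
    using integrable_abs[OF iuv] by (subst nn_integral_eq_integral[symmetric]) (auto simp: ennreal_mult' abs_mult)
  have e2: "(\<integral>\<^sup>+\<omega>. (ennreal \<bar>u \<omega>\<bar>)^2 \<partial>M) = ennreal (\<integral>\<omega>. (u \<omega>)\<^sup>2 \<partial>M)"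
    using iu by (subst nn_integral_eq_integral[symmetric]) (auto intro!: nn_integral_cong simp: ennreal_power power2_abs)
  have e3: "(\<integral>\<^sup>+\<omega>. (ennreal \<bar>v \<omega>\<bar>)^2 \<partial>M) = ennreal (\<integral>\<omega>. (v \<omega>)\<^sup>2 \<partial>M)"
    using iv by (subst nn_integral_eq_integral[symmetric]) (auto intro!: nn_integral_cong simp: ennreal_power power2_abs)
  have "(\<integral>\<^sup>+\<omega>. ennreal \<bar>u \<omega>\<bar> * ennreal \<bar>v \<omega>\<bar> \<partial>M)\<^sup>2 \<le>
     (\<integral>\<^sup>+\<omega>. (ennreal \<bar>u \<omega>\<bar>)^2 \<partial>M) * (\<integral>\<^sup>+\<omega>. (ennreal \<bar>v \<omega>\<bar>)^2 \<partial>M)"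
    by (rule Cauchy_Schwarz_nn_integral) auto
  then have "ennreal ((\<integral>\<omega>. \<bar>u \<omega> * v \<omega>\<bar> \<partial>M)\<^sup>2) \<le> ennreal ((\<integral>\<omega>. (u \<omega>)\<^sup>2 \<partial>M) * (\<integral>\<omega>. (v \<omega>)\<^sup>2 \<partial>M))"
    unfolding e1 e2 e3 by (simp add: ennreal_power ennreal_mult')
  then have "(\<integral>\<omega>. \<bar>u \<omega> * v \<omega>\<bar> \<partial>M)\<^sup>2 \<le> (\<integral>\<omega>. (u \<omega>)\<^sup>2 \<partial>M) * (\<integral>\<omega>. (v \<omega>)\<^sup>2 \<partial>M)"
    by (subst (asm) ennreal_le_iff) (auto intro!: mult_nonneg_nonneg integral_nonneg_AE)
  then have "sqrt ((\<integral>\<omega>. \<bar>u \<omega> * v \<omega>\<bar> \<partial>M)\<^sup>2) \<le> sqrt ((\<integral>\<omega>. (u \<omega>)\<^sup>2 \<partial>M) * (\<integral>\<omega>. (v \<omega>)\<^sup>2 \<partial>M))"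
    using real_sqrt_le_mono by blast
  moreover have "0 \<le> (\<integral>\<omega>. \<bar>u \<omega> * v \<omega>\<bar> \<partial>M)" by (intro integral_nonneg_AE) auto
  ultimately show "(\<integral>\<omega>. \<bar>u \<omega> * v \<omega>\<bar> \<partial>M) \<le> sqrt (\<integral>\<omega>. (u \<omega>)\<^sup>2 \<partial>M) * sqrt (\<integral>\<omega>. (v \<omega>)\<^sup>2 \<partial>M)"
    by (simp add: real_sqrt_mult)
qed

lemma minkowski_real:
  fixes u v :: "'a \<Rightarrow> real"
  assumes [measurable]: "u \<in> borel_measurable M" "v \<in> borel_measurable M"
    and iu: "integrable M (\<lambda>\<omega>. (u \<omega>)\<^sup>2)" and iv: "integrable M (\<lambda>\<omega>. (v \<omega>)\<^sup>2)"
  shows "sqrt (\<integral>\<omega>. (u \<omega> + v \<omega>)\<^sup>2 \<partial>M) \<le> sqrt (\<integral>\<omega>. (u \<omega>)\<^sup>2 \<partial>M) + sqrt (\<integral>\<omega>. (v \<omega>)\<^sup>2 \<partial>M)"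
proof -
  note c = cs_real[OF assms]
  have iuv: "integrable M (\<lambda>\<omega>. 2 * (u \<omega> * v \<omega>))" using c(1) by auto
  have "(\<integral>\<omega>. (u \<omega> + v \<omega>)\<^sup>2 \<partial>M) = (\<integral>\<omega>. (u \<omega>)\<^sup>2 + 2 * (u \<omega> * v \<omega>) + (v \<omega>)\<^sup>2 \<partial>M)"
    by (intro Bochner_Integration.integral_cong refl) (simp add: power2_sum algebra_simps)
  also have "\<dots> = (\<integral>\<omega>. (u \<omega>)\<^sup>2 \<partial>M) + 2 * (\<integral>\<omega>. u \<omega> * v \<omega> \<partial>M) + (\<integral>\<omega>. (v \<omega>)\<^sup>2 \<partial>M)"
    using iu iv iuv c(1) by simp
  also have "(\<integral>\<omega>. u \<omega> * v \<omega> \<partial>M) \<le> (\<integral>\<omega>. \<bar>u \<omega> * v \<omega>\<bar> \<partial>M)"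
    using c(1) by (intro integral_mono) auto
  also note c(2)
  finally have "(\<integral>\<omega>. (u \<omega> + v \<omega>)\<^sup>2 \<partial>M) \<le> (sqrt (\<integral>\<omega>. (u \<omega>)\<^sup>2 \<partial>M) + sqrt (\<integral>\<omega>. (v \<omega>)\<^sup>2 \<partial>M))\<^sup>2"
    using integral_nonneg_AE[of "\<lambda>\<omega>. (u \<omega>)\<^sup>2"] integral_nonneg_AE[of "\<lambda>\<omega>. (v \<omega>)\<^sup>2"]
    by (simp add: power2_sum)
  then have "sqrt (\<integral>\<omega>. (u \<omega> + v \<omega>)\<^sup>2 \<partial>M) \<le> sqrt ((sqrt (\<integral>\<omega>. (u \<omega>)\<^sup>2 \<partial>M) + sqrt (\<integral>\<omega>. (v \<omega>)\<^sup>2 \<partial>M))\<^sup>2)"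
    by (rule real_sqrt_le_mono)
  also have "\<dots> = sqrt (\<integral>\<omega>. (u \<omega>)\<^sup>2 \<partial>M) + sqrt (\<integral>\<omega>. (v \<omega>)\<^sup>2 \<partial>M)"
    by (rule real_sqrt_unique) auto
  finally show ?thesis .
qed

lemma variance_le:
  fixes g :: "'a \<Rightarrow> real"
  assumes [measurable]: "g \<in> borel_measurable M" and ig: "integrable M (\<lambda>\<omega>. (g \<omega>)\<^sup>2)"
  shows "(\<integral>\<omega>. (g \<omega> - (\<integral>\<omega>'. g \<omega>' \<partial>M))\<^sup>2 \<partial>M) \<le> (\<integral>\<omega>. (g \<omega>)\<^sup>2 \<partial>M)"
proof -
  have i1: "integrable M g" using square_integrable_imp_integrable[OF _ ig] by simp
  define c where "c = (\<integral>\<omega>'. g \<omega>' \<partial>M)"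
  have "(\<integral>\<omega>. (g \<omega> - c)\<^sup>2 \<partial>M) = (\<integral>\<omega>. (g \<omega>)\<^sup>2 - 2 * c * g \<omega> + c\<^sup>2 \<partial>M)"
    by (intro Bochner_Integration.integral_cong refl) (simp add: power2_diff algebra_simps)
  also have "\<dots> = (\<integral>\<omega>. (g \<omega>)\<^sup>2 \<partial>M) - 2 * c * c + c\<^sup>2"
    using ig i1 by (simp add: c_def prob_space)
  finally show ?thesis unfolding c_def by (simp add: power2_eq_square)
qed

end



lemma K_shift:
  fixes K :: "real \<Rightarrow> real"
  assumes [measurable]: "K \<in> borel_measurable borel"
    and K1: "(\<integral>\<^sup>+u. ennreal (K u) \<partial>lborel) = 1" and h: "0 < h"
  shows "(\<integral>\<^sup>+s. ennreal (K ((y - s) / h)) \<partial>lborel) = ennreal h"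
proof -
  have "1 = ennreal \<bar>- 1 / h\<bar> * (\<integral>\<^sup>+s. ennreal (K (y / h + (- 1 / h) * s)) \<partial>lborel)"
    unfolding K1[symmetric] by (rule nn_integral_real_affine) (use h in auto)
  also have "(\<lambda>s. ennreal (K (y / h + (- 1 / h) * s))) = (\<lambda>s. ennreal (K ((y - s) / h)))"
    by (intro ext) (simp add: diff_divide_distrib)
  finally have e: "1 = ennreal (1 / h) * (\<integral>\<^sup>+s. ennreal (K ((y - s) / h)) \<partial>lborel)"
    using h by simp
  have "ennreal h * 1 = ennreal h * ennreal (1 / h) * (\<integral>\<^sup>+s. ennreal (K ((y - s) / h)) \<partial>lborel)"
    by (subst e) (simp add: mult.assoc)
  also have "ennreal h * ennreal (1 / h) = 1"
    using h by (simp add: ennreal_mult'[symmetric])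
  finally show ?thesis by simp
qed

context prob_space begin

lemma fubini_bound:
  fixes S D :: "'a \<Rightarrow> real" and q K :: "real \<Rightarrow> real"
  assumes ind: "indep_var lborel S lborel D"
    and dS: "distributed M lborel S (\<lambda>y. ennreal (q y))"
    and qc: "\<And>y. q y \<le> c" and qn: "\<And>y. 0 \<le> q y"
    and Km[measurable]: "K \<in> borel_measurable borel" and Kn: "\<And>u. 0 \<le> K u"
    and K1: "(\<integral>\<^sup>+u. ennreal (K u) \<partial>lborel) = 1"
    and h: "0 < h"
  shows "(\<integral>\<^sup>+\<omega>. ennreal (\<bar>D \<omega>\<bar> * K ((x - S \<omega> - t * D \<omega>) / h)) \<partial>M)
          \<le> ennreal (c * h) * (\<integral>\<^sup>+\<omega>. ennreal \<bar>D \<omega>\<bar> \<partial>M)"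
proof -
  have c0: "0 \<le> c" using qc[of 0] qn[of 0] by simp
  have rvS[measurable]: "S \<in> borel_measurable M" using indep_var_rv1[OF ind] by simp
  have rvD[measurable]: "D \<in> borel_measurable M" using indep_var_rv2[OF ind] by simp
  have qm[measurable]: "q \<in> borel_measurable borel"
    using distributed_borel_measurable[OF dS] qn by (subst (asm) borel_measurable_ennreal_iff) auto
  interpret PS: prob_space "distr M lborel S" by (rule prob_space_distr) simp
  interpret PD: prob_space "distr M lborel D" by (rule prob_space_distr) simp
  interpret PP: pair_prob_space "distr M lborel S" "distr M lborel D" ..
  define F where "F = (\<lambda>z::real \<times> real. ennreal (\<bar>snd z\<bar> * K ((x - fst z - t * snd z) / h)))"
  have Fm[measurable]: "F \<in> borel_measurable (lborel \<Otimes>\<^sub>M lborel)"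
    unfolding F_def by measurable
  have joint: "distr M (lborel \<Otimes>\<^sub>M lborel) (\<lambda>\<omega>. (S \<omega>, D \<omega>)) = distr M lborel S \<Otimes>\<^sub>M distr M lborel D"
    using ind by (simp add: indep_var_distribution_eq)
  have "(\<integral>\<^sup>+\<omega>. ennreal (\<bar>D \<omega>\<bar> * K ((x - S \<omega> - t * D \<omega>) / h)) \<partial>M) = (\<integral>\<^sup>+\<omega>. F (S \<omega>, D \<omega>) \<partial>M)"
    by (simp add: F_def)
  also have "\<dots> = (\<integral>\<^sup>+z. F z \<partial>distr M (lborel \<Otimes>\<^sub>M lborel) (\<lambda>\<omega>. (S \<omega>, D \<omega>)))"
    by (rule nn_integral_distr[symmetric]) auto
  also have "\<dots> = (\<integral>\<^sup>+z. F z \<partial>(distr M lborel S \<Otimes>\<^sub>M distr M lborel D))"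
    by (simp add: joint)
  also have "\<dots> = (\<integral>\<^sup>+d. (\<integral>\<^sup>+s. F (s, d) \<partial>distr M lborel S) \<partial>distr M lborel D)"
    by (rule PP.nn_integral_snd[symmetric]) (simp add: sets_pair_measure_cong)
  also have "\<dots> \<le> (\<integral>\<^sup>+d. ennreal (c * h) * ennreal \<bar>d\<bar> \<partial>distr M lborel D)"
  proof (rule nn_integral_mono)
    fix d :: real
    have "(\<integral>\<^sup>+s. F (s, d) \<partial>distr M lborel S) = (\<integral>\<^sup>+s. F (s, d) \<partial>density lborel (\<lambda>y. ennreal (q y)))"
      by (simp add: distributed_distr_eq_density[OF dS])
    also have "\<dots> = (\<integral>\<^sup>+s. ennreal (q s) * F (s, d) \<partial>lborel)"
      by (rule nn_integral_density) auto
    also have "\<dots> \<le> (\<integral>\<^sup>+s. ennreal (c * \<bar>d\<bar>) * ennreal (K (((x - t * d) - s) / h)) \<partial>lborel)"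
    proof (rule nn_integral_mono)
      fix s
      have "q s * (\<bar>d\<bar> * K ((x - s - t * d) / h)) \<le> c * (\<bar>d\<bar> * K ((x - s - t * d) / h))"
        by (intro mult_right_mono qc) (simp add: Kn)
      then show "ennreal (q s) * F (s, d) \<le> ennreal (c * \<bar>d\<bar>) * ennreal (K (((x - t * d) - s) / h))"
        unfolding F_def using qn[of s] Kn c0
        by (simp add: ennreal_mult'[symmetric] ennreal_mult[symmetric] algebra_simps)
    qed
    also have "\<dots> = ennreal (c * \<bar>d\<bar>) * (\<integral>\<^sup>+s. ennreal (K (((x - t * d) - s) / h)) \<partial>lborel)"
      by (rule nn_integral_cmult) simp
    also have "\<dots> = ennreal (c * \<bar>d\<bar>) * ennreal h"
      by (simp add: K_shift[OF Km K1 h])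
    also have "\<dots> = ennreal (c * h) * ennreal \<bar>d\<bar>"
      using c0 h by (simp add: ennreal_mult'[symmetric] ennreal_mult[symmetric] algebra_simps)
    finally show "(\<integral>\<^sup>+s. F (s, d) \<partial>distr M lborel S) \<le> ennreal (c * h) * ennreal \<bar>d\<bar>" .
  qed
  also have "\<dots> = ennreal (c * h) * (\<integral>\<^sup>+d. ennreal \<bar>d\<bar> \<partial>distr M lborel D)"
    by (rule nn_integral_cmult) simp
  also have "(\<integral>\<^sup>+d. ennreal \<bar>d\<bar> \<partial>distr M lborel D) = (\<integral>\<^sup>+\<omega>. ennreal \<bar>D \<omega>\<bar> \<partial>M)"
    by (rule nn_integral_distr) auto
  finally show ?thesis .
qed

end



context prob_space begin

lemma lin_comb_sq:
  fixes e :: "'i \<Rightarrow> 'a \<Rightarrow> real" and w :: "'k \<Rightarrow> real" and g :: "'k \<Rightarrow> 'i"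
  assumes ind: "indep_vars (\<lambda>_. borel) e UNIV"
    and em[measurable]: "\<And>i. e i \<in> borel_measurable M"
    and esq: "\<And>i. integrable M (\<lambda>\<omega>. (e i \<omega>)\<^sup>2)"
    and emean: "\<And>i. (\<integral>\<omega>. e i \<omega> \<partial>M) = 0"
    and evar: "\<And>i. (\<integral>\<omega>. (e i \<omega>)\<^sup>2 \<partial>M) = \<sigma>2"
    and F: "finite F" and g: "inj_on g F"
  shows "(\<integral>\<omega>. (\<Sum>k\<in>F. w k * e (g k) \<omega>)\<^sup>2 \<partial>M) = \<sigma>2 * (\<Sum>k\<in>F. (w k)\<^sup>2)"
proof -
  have iprod: "integrable M (\<lambda>\<omega>. e i \<omega> * e j \<omega>)" for i j
    by (rule cs_real(1)) (auto intro: esq)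
  have eint: "integrable M (e i)" for i
    by (rule square_integrable_imp_integrable) (auto intro: esq)
  have Eprod: "(\<integral>\<omega>. e i \<omega> * e j \<omega> \<partial>M) = (if i = j then \<sigma>2 else 0)" for i j
  proof (cases "i = j")
    case True then show ?thesis using evar[of i] by (simp add: power2_eq_square)
  next
    case False
    have "indep_vars (\<lambda>_. borel) e {i, j}" by (rule indep_vars_subset[OF ind]) auto
    then have "(\<integral>\<omega>. (\<Prod>l\<in>{i,j}. e l \<omega>) \<partial>M) = (\<Prod>l\<in>{i,j}. \<integral>\<omega>. e l \<omega> \<partial>M)"
      by (intro indep_vars_lebesgue_integral) (auto intro: eint)
    then show ?thesis using False emean by simp
  qed
  have pw: "(\<lambda>\<omega>. (\<Sum>k\<in>F. w k * e (g k) \<omega>)\<^sup>2) = (\<lambda>\<omega>. \<Sum>k\<in>F. \<Sum>l\<in>F. w k * w l * (e (g k) \<omega> * e (g l) \<omega>))"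
    by (intro ext) (simp add: power2_eq_square sum_product mult_ac)
  have ik: "integrable M (\<lambda>\<omega>. \<Sum>l\<in>F. w k * w l * (e (g k) \<omega> * e (g l) \<omega>))" for k
    by (intro Bochner_Integration.integrable_sum Bochner_Integration.integrable_mult_right iprod)
  have "(\<integral>\<omega>. (\<Sum>k\<in>F. w k * e (g k) \<omega>)\<^sup>2 \<partial>M) = (\<Sum>k\<in>F. \<integral>\<omega>. (\<Sum>l\<in>F. w k * w l * (e (g k) \<omega> * e (g l) \<omega>)) \<partial>M)"
    unfolding pw by (rule Bochner_Integration.integral_sum) (rule ik)
  also have "\<dots> = (\<Sum>k\<in>F. \<Sum>l\<in>F. \<integral>\<omega>. w k * w l * (e (g k) \<omega> * e (g l) \<omega>) \<partial>M)"
    by (intro sum.cong refl Bochner_Integration.integral_sum Bochner_Integration.integrable_mult_right iprod)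
  also have "\<dots> = (\<Sum>k\<in>F. \<Sum>l\<in>F. w k * w l * (\<integral>\<omega>. e (g k) \<omega> * e (g l) \<omega> \<partial>M))"
    by (intro sum.cong refl Bochner_Integration.integral_mult_right iprod)
  also have "\<dots> = (\<Sum>k\<in>F. \<Sum>l\<in>F. (if l = k then w k * w l * \<sigma>2 else 0))"
    by (intro sum.cong refl) (auto simp: Eprod dest: inj_onD[OF g])
  also have "\<dots> = (\<Sum>k\<in>F. w k * w k * \<sigma>2)"
    using F by (simp add: sum.delta)
  also have "\<dots> = \<sigma>2 * (\<Sum>k\<in>F. (w k)\<^sup>2)"
    by (simp add: sum_distrib_left power2_eq_square algebra_simps)
  finally show ?thesis .
qed


lemma lin_comb_sq_int:
  fixes e :: "'i \<Rightarrow> 'a \<Rightarrow> real" and w :: "'k \<Rightarrow> real" and g :: "'k \<Rightarrow> 'i"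
  assumes em[measurable]: "\<And>i. e i \<in> borel_measurable M"
    and esq: "\<And>i. integrable M (\<lambda>\<omega>. (e i \<omega>)\<^sup>2)"
  shows "integrable M (\<lambda>\<omega>. (\<Sum>k\<in>F. w k * e (g k) \<omega>)\<^sup>2)"
proof -
  have iprod: "integrable M (\<lambda>\<omega>. e i \<omega> * e j \<omega>)" for i j
    by (rule cs_real(1)) (auto intro: esq)
  have pw: "(\<lambda>\<omega>. (\<Sum>k\<in>F. w k * e (g k) \<omega>)\<^sup>2) = (\<lambda>\<omega>. \<Sum>k\<in>F. \<Sum>l\<in>F. w k * w l * (e (g k) \<omega> * e (g l) \<omega>))"
    by (intro ext) (simp add: power2_eq_square sum_product mult_ac)
  show ?thesis unfolding pw
    by (intro Bochner_Integration.integrable_sum Bochner_Integration.integrable_mult_right iprod)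
qed

end

lemma box_finite: "finite (box_idx N :: ('d::finite \<Rightarrow> int) set)"
proof (rule finite_subset)
  show "box_idx N \<subseteq> {f. \<forall>x. (x \<in> (UNIV::'d set) \<longrightarrow> f x \<in> {0..int N - 1}) \<and> (x \<notin> UNIV \<longrightarrow> f x = 0)}"
    by (auto simp: box_idx_def)
  show "finite {f. \<forall>x. (x \<in> (UNIV::'d set) \<longrightarrow> f x \<in> {0..int N - 1}) \<and> (x \<notin> UNIV \<longrightarrow> f x = (0::int))}"
    by (rule finite_set_of_finite_funs) auto
qed

lemma box_mono:
  assumes "M \<le> N" shows "box_idx M \<subseteq> (box_idx N :: ('d::finite \<Rightarrow> int) set)"
proof
  fix k :: "'d \<Rightarrow> int" assume "k \<in> box_idx M"
  then have "0 \<le> k \<tau> \<and> k \<tau> \<le> int M - 1" for \<tau> by (simp add: box_idx_def)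
  moreover have "int M \<le> int N" using assms by simp
  ultimately have "0 \<le> k \<tau> \<and> k \<tau> \<le> int N - 1" for \<tau> by (meson order_trans diff_right_mono)
  then show "k \<in> box_idx N" by (simp add: box_idx_def)
qed

lemma box_diff_tail:
  "box_idx N - box_idx M \<subseteq> {k :: 'd::finite \<Rightarrow> int. nonneg_idx k \<and> sup_norm_idx k \<ge> int M}"
proof
  fix k :: "'d \<Rightarrow> int" assume k: "k \<in> box_idx N - box_idx M"
  then have nn: "\<And>\<tau>. 0 \<le> k \<tau>" by (auto simp: box_idx_def)
  from k obtain \<tau> where "\<not> (0 \<le> k \<tau> \<and> k \<tau> \<le> int M - 1)" by (auto simp: box_idx_def)
  with nn have t: "int M \<le> k \<tau>" by force
  have "\<bar>k \<tau>\<bar> \<le> Max (range (\<lambda>\<tau>. \<bar>k \<tau>\<bar>))" by (rule Max_ge) auto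
  with t nn[of \<tau>] have "int M \<le> sup_norm_idx k" by (simp add: sup_norm_idx_def)
  with nn show "k \<in> {k. nonneg_idx k \<and> sup_norm_idx k \<ge> int M}" by (simp add: nonneg_idx_def)
qed




lemma sq_aux:
  fixes u v e :: real
  assumes "0 \<le> u" "0 \<le> v" "\<bar>u - v\<bar> \<le> e"
  shows "(u - v)\<^sup>2 \<le> e * (u + v)"
proof -
  have "(u - v)\<^sup>2 = \<bar>u - v\<bar> * \<bar>u - v\<bar>" by (simp add: power2_eq_square)
  also have "\<dots> \<le> e * (u + v)"
    using assms by (intro mult_mono) auto
  finally show ?thesis .
qed

lemma pointwise_aux:
  fixes K :: "real \<Rightarrow> real"
  assumes Kn: "\<And>u. 0 \<le> K u" and Kl: "\<And>u v. \<bar>K u - K v\<bar> \<le> LK * \<bar>u - v\<bar>" and h: "0 < h"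
  shows "(K ((x - s) / h) / sqrt h - K ((x - s - d) / h) / sqrt h)\<^sup>2
    \<le> LK / h\<^sup>2 * (\<bar>d\<bar> * K ((x - s) / h) + \<bar>d\<bar> * K ((x - s - d) / h))"
proof -
  have e: "\<bar>K ((x - s) / h) - K ((x - s - d) / h)\<bar> \<le> LK * \<bar>d\<bar> / h"
    using Kl[of "(x - s) / h" "(x - s - d) / h"] h by (simp add: diff_divide_distrib abs_divide)
  have "(K ((x - s) / h) / sqrt h - K ((x - s - d) / h) / sqrt h)\<^sup>2
      = (K ((x - s) / h) - K ((x - s - d) / h))\<^sup>2 / h"
    using h by (simp add: diff_divide_distrib[symmetric] power_divide)
  also have "\<dots> \<le> (LK * \<bar>d\<bar> / h * (K ((x - s) / h) + K ((x - s - d) / h))) / h"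
    using h by (intro divide_right_mono sq_aux Kn e) auto
  also have "\<dots> = LK / h\<^sup>2 * (\<bar>d\<bar> * K ((x - s) / h) + \<bar>d\<bar> * K ((x - s - d) / h))"
    by (simp add: power2_eq_square field_simps)
  finally show ?thesis .
qed

context prob_space begin

lemma main_finite:
  fixes S D :: "'a \<Rightarrow> real" and q K :: "real \<Rightarrow> real"
  assumes ind: "indep_var lborel S lborel D"
    and dS: "distributed M lborel S (\<lambda>y. ennreal (q y))"
    and qc: "\<And>y. q y \<le> c" and qn: "\<And>y. 0 \<le> q y"
    and Km[measurable]: "K \<in> borel_measurable borel" and Kn: "\<And>u. 0 \<le> K u"
    and Kb: "\<And>u. K u \<le> \<kappa>"
    and Kl: "\<And>u v. \<bar>K u - K v\<bar> \<le> LK * \<bar>u - v\<bar>"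
    and K1: "(\<integral>\<^sup>+u. ennreal (K u) \<partial>lborel) = 1"
    and h: "0 < h" and LK0: "0 \<le> LK"
    and D2: "integrable M (\<lambda>\<omega>. (D \<omega>)\<^sup>2)"
  shows "(\<integral>\<omega>. (K ((x - S \<omega>) / h) / sqrt h - K ((x - S \<omega> - D \<omega>) / h) / sqrt h)\<^sup>2 \<partial>M)
           \<le> 2 * LK * c * sqrt (\<integral>\<omega>. (D \<omega>)\<^sup>2 \<partial>M) / h"
proof -
  have c0: "0 \<le> c" using qc[of 0] qn[of 0] by simp
  have rvS[measurable]: "S \<in> borel_measurable M" using indep_var_rv1[OF ind] by simp
  have rvD[measurable]: "D \<in> borel_measurable M" using indep_var_rv2[OF ind] by simp
  have iD: "integrable M D" by (rule square_integrable_imp_integrable) (auto intro: D2)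
  have EabsD: "(\<integral>\<omega>. \<bar>D \<omega>\<bar> \<partial>M) \<le> sqrt (\<integral>\<omega>. (D \<omega>)\<^sup>2 \<partial>M)"
    using cs_real(2)[of D "\<lambda>_. 1", OF rvD _ D2] by (simp add: prob_space)
  have Ht: "(\<integral>\<omega>. \<bar>D \<omega>\<bar> * K ((x - S \<omega> - t * D \<omega>) / h) \<partial>M) \<le> c * h * sqrt (\<integral>\<omega>. (D \<omega>)\<^sup>2 \<partial>M)"
    and iHt: "integrable M (\<lambda>\<omega>. \<bar>D \<omega>\<bar> * K ((x - S \<omega> - t * D \<omega>) / h))" for t
  proof -
    show iH: "integrable M (\<lambda>\<omega>. \<bar>D \<omega>\<bar> * K ((x - S \<omega> - t * D \<omega>) / h))"
    proof (rule Bochner_Integration.integrable_bound[where f="\<lambda>\<omega>. \<kappa> * D \<omega>"])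
      show "integrable M (\<lambda>\<omega>. \<kappa> * D \<omega>)" using iD by simp
      show "AE \<omega> in M. norm (\<bar>D \<omega>\<bar> * K ((x - S \<omega> - t * D \<omega>) / h)) \<le> norm (\<kappa> * D \<omega>)"
      proof (intro AE_I2)
        fix \<omega>
        have k: "K ((x - S \<omega> - t * D \<omega>) / h) \<le> \<bar>\<kappa>\<bar>" using Kb[of "(x - S \<omega> - t * D \<omega>) / h"] by linarith
        have "\<bar>D \<omega>\<bar> * K ((x - S \<omega> - t * D \<omega>) / h) \<le> \<bar>D \<omega>\<bar> * \<bar>\<kappa>\<bar>"
          by (rule mult_left_mono[OF k]) simp
        then show "norm (\<bar>D \<omega>\<bar> * K ((x - S \<omega> - t * D \<omega>) / h)) \<le> norm (\<kappa> * D \<omega>)"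
          using Kn[of "(x - S \<omega> - t * D \<omega>) / h"] by (simp add: abs_mult mult.commute)
      qed
    qed simp
    have "ennreal (\<integral>\<omega>. \<bar>D \<omega>\<bar> * K ((x - S \<omega> - t * D \<omega>) / h) \<partial>M)
        = (\<integral>\<^sup>+\<omega>. ennreal (\<bar>D \<omega>\<bar> * K ((x - S \<omega> - t * D \<omega>) / h)) \<partial>M)"
      using iH Kn by (subst nn_integral_eq_integral) auto
    also have "\<dots> \<le> ennreal (c * h) * (\<integral>\<^sup>+\<omega>. ennreal \<bar>D \<omega>\<bar> \<partial>M)"
      by (rule fubini_bound[OF ind dS qc qn Km Kn K1 h])
    also have "(\<integral>\<^sup>+\<omega>. ennreal \<bar>D \<omega>\<bar> \<partial>M) = ennreal (\<integral>\<omega>. \<bar>D \<omega>\<bar> \<partial>M)"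
      using iD by (subst nn_integral_eq_integral) auto
    also have "ennreal (c * h) * ennreal (\<integral>\<omega>. \<bar>D \<omega>\<bar> \<partial>M) = ennreal (c * h * (\<integral>\<omega>. \<bar>D \<omega>\<bar> \<partial>M))"
      using c0 h by (subst ennreal_mult) auto
    finally have "(\<integral>\<omega>. \<bar>D \<omega>\<bar> * K ((x - S \<omega> - t * D \<omega>) / h) \<partial>M) \<le> c * h * (\<integral>\<omega>. \<bar>D \<omega>\<bar> \<partial>M)"
      using c0 h by (subst (asm) ennreal_le_iff) (auto intro!: mult_nonneg_nonneg integral_nonneg_AE)
    also have "\<dots> \<le> c * h * sqrt (\<integral>\<omega>. (D \<omega>)\<^sup>2 \<partial>M)"
      using c0 h EabsD by (intro mult_left_mono) auto
    finally show "(\<integral>\<omega>. \<bar>D \<omega>\<bar> * K ((x - S \<omega> - t * D \<omega>) / h) \<partial>M) \<le> c * h * sqrt (\<integral>\<omega>. (D \<omega>)\<^sup>2 \<partial>M)" .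
  qed
  note H0 = Ht[of 0] and H1 = Ht[of 1] and iH0 = iHt[of 0] and iH1 = iHt[of 1]
  have iR: "integrable M (\<lambda>\<omega>. LK / h\<^sup>2 * (\<bar>D \<omega>\<bar> * K ((x - S \<omega>) / h) + \<bar>D \<omega>\<bar> * K ((x - S \<omega> - D \<omega>) / h)))"
    using iH0 iH1 by simp
  have pw: "(K ((x - S \<omega>) / h) / sqrt h - K ((x - S \<omega> - D \<omega>) / h) / sqrt h)\<^sup>2
    \<le> LK / h\<^sup>2 * (\<bar>D \<omega>\<bar> * K ((x - S \<omega>) / h) + \<bar>D \<omega>\<bar> * K ((x - S \<omega> - D \<omega>) / h))" for \<omega>
    by (rule pointwise_aux[OF Kn Kl h])
  have iL: "integrable M (\<lambda>\<omega>. (K ((x - S \<omega>) / h) / sqrt h - K ((x - S \<omega> - D \<omega>) / h) / sqrt h)\<^sup>2)"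
  proof (rule Bochner_Integration.integrable_bound[OF iR])
    show "AE \<omega> in M. norm ((K ((x - S \<omega>) / h) / sqrt h - K ((x - S \<omega> - D \<omega>) / h) / sqrt h)\<^sup>2)
       \<le> norm (LK / h\<^sup>2 * (\<bar>D \<omega>\<bar> * K ((x - S \<omega>) / h) + \<bar>D \<omega>\<bar> * K ((x - S \<omega> - D \<omega>) / h)))"
    proof (intro AE_I2)
      fix \<omega>
      have R0: "0 \<le> LK / h\<^sup>2 * (\<bar>D \<omega>\<bar> * K ((x - S \<omega>) / h) + \<bar>D \<omega>\<bar> * K ((x - S \<omega> - D \<omega>) / h))"
        using LK0 Kn by (intro mult_nonneg_nonneg add_nonneg_nonneg) auto
      have nR: "norm (LK / h\<^sup>2 * (\<bar>D \<omega>\<bar> * K ((x - S \<omega>) / h) + \<bar>D \<omega>\<bar> * K ((x - S \<omega> - D \<omega>) / h)))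
         = LK / h\<^sup>2 * (\<bar>D \<omega>\<bar> * K ((x - S \<omega>) / h) + \<bar>D \<omega>\<bar> * K ((x - S \<omega> - D \<omega>) / h))"
        unfolding real_norm_def by (rule abs_of_nonneg[OF R0])
      have nL: "norm ((K ((x - S \<omega>) / h) / sqrt h - K ((x - S \<omega> - D \<omega>) / h) / sqrt h)\<^sup>2)
         = (K ((x - S \<omega>) / h) / sqrt h - K ((x - S \<omega> - D \<omega>) / h) / sqrt h)\<^sup>2"
        by simp
      show "norm ((K ((x - S \<omega>) / h) / sqrt h - K ((x - S \<omega> - D \<omega>) / h) / sqrt h)\<^sup>2)
       \<le> norm (LK / h\<^sup>2 * (\<bar>D \<omega>\<bar> * K ((x - S \<omega>) / h) + \<bar>D \<omega>\<bar> * K ((x - S \<omega> - D \<omega>) / h)))"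
        unfolding nR nL by (rule pw)
    qed
  qed simp
  have "(\<integral>\<omega>. (K ((x - S \<omega>) / h) / sqrt h - K ((x - S \<omega> - D \<omega>) / h) / sqrt h)\<^sup>2 \<partial>M)
      \<le> (\<integral>\<omega>. LK / h\<^sup>2 * (\<bar>D \<omega>\<bar> * K ((x - S \<omega>) / h) + \<bar>D \<omega>\<bar> * K ((x - S \<omega> - D \<omega>) / h)) \<partial>M)"
    by (rule integral_mono[OF iL iR pw])
  also have "\<dots> = LK / h\<^sup>2 * ((\<integral>\<omega>. \<bar>D \<omega>\<bar> * K ((x - S \<omega>) / h) \<partial>M) + (\<integral>\<omega>. \<bar>D \<omega>\<bar> * K ((x - S \<omega> - D \<omega>) / h) \<partial>M))"
    using iH0 iH1 by simp
  also have "\<dots> \<le> LK / h\<^sup>2 * (c * h * sqrt (\<integral>\<omega>. (D \<omega>)\<^sup>2 \<partial>M) + c * h * sqrt (\<integral>\<omega>. (D \<omega>)\<^sup>2 \<partial>M))"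
    using H0 H1 LK0 h by (intro mult_left_mono add_mono) auto
  also have "\<dots> = 2 * LK * c * sqrt (\<integral>\<omega>. (D \<omega>)\<^sup>2 \<partial>M) / h"
    using h by (simp add: power2_eq_square field_simps)
  finally show ?thesis .
qed

end



theorem lemma3:
  fixes M :: "'a measure"
    and eps :: "('d::finite \<Rightarrow> int) \<Rightarrow> 'a \<Rightarrow> real"
    and a :: "('d \<Rightarrow> int) \<Rightarrow> real"
    and X :: "('d \<Rightarrow> int) \<Rightarrow> 'a \<Rightarrow> real"
    and K :: "real \<Rightarrow> real"
    and b :: "nat \<Rightarrow> real"
    and m :: "nat \<Rightarrow> nat"
    and p :: "real \<Rightarrow> real"
    and pm :: "nat \<Rightarrow> real \<Rightarrow> real"
    and pj :: "('d \<Rightarrow> int) \<Rightarrow> real \<times> real \<Rightarrow> real"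
    and pjm :: "('d \<Rightarrow> int) \<Rightarrow> nat \<Rightarrow> real \<times> real \<Rightarrow> real"
    and x :: real
  assumes M: "prob_space M"
    \<comment> \<open>innovations: i.i.d., mean zero, finite second moment\<close>
    and eps_rv: "\<And>i. eps i \<in> borel_measurable M"
    and eps_indep: "prob_space.indep_vars M (\<lambda>_. borel) eps UNIV"
    and eps_ident: "\<And>i. distr M borel (eps i) = distr M borel (eps (\<lambda>_. 0))"
    and eps_sq: "integrable M (\<lambda>\<omega>. (eps (\<lambda>_. 0) \<omega>)\<^sup>2)"
    and eps_mean: "integral\<^sup>L M (eps (\<lambda>_. 0)) = 0"
    \<comment> \<open>square-summable coefficients\<close>
    and a_sq: "(\<lambda>k. (a k)\<^sup>2) summable_on {k. nonneg_idx k}"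
    \<comment> \<open>X_i = sum_{k >= 0} a_k eps_{i-k}, as the L^2 limit of the box partial sums\<close>
    and X_rv: "\<And>i. X i \<in> borel_measurable M"
    and X_sq: "\<And>i. integrable M (\<lambda>\<omega>. (X i \<omega>)\<^sup>2)"
    and X_lim: "\<And>i. (\<lambda>N. integral\<^sup>L M (\<lambda>\<omega>. (X i \<omega> - X_trunc eps a N i \<omega>)\<^sup>2)) \<longlonglongrightarrow> 0"
    \<comment> \<open>kernel: bounded Lipschitz probability density\<close>
    and K_nonneg: "\<And>u. 0 \<le> K u"
    and K_int: "(K has_integral 1) UNIV"
    and K_bdd: "bounded (range K)"
    and K_lip: "\<exists>L. L-lipschitz_on UNIV K"
    \<comment> \<open>bandwidths and truncation levels\<close>
    and b_pos: "\<And>n. 0 < b n"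
    and b_lim: "b \<longlonglongrightarrow> 0"
    and b_nd: "filterlim (\<lambda>n. real n ^ CARD('d) * b n) at_top sequentially"
    and m_pos: "\<And>n. 0 < m n"
    \<comment> \<open>Condition D (i)\<close>
    and p_nonneg: "\<And>y. 0 \<le> p y"
    and p_dens: "distributed M lborel (X (\<lambda>_. 0)) (\<lambda>y. ennreal (p y))"
    and pm_nonneg: "\<And>k y. 0 \<le> pm k y"
    and pm_dens: "\<And>k. 0 < k \<Longrightarrow>
        distributed M lborel (X_trunc eps a k (\<lambda>_. 0)) (\<lambda>y. ennreal (pm k y))"
    and D_lip: "\<exists>L. L-lipschitz_on UNIV p \<and> (\<forall>k>0. L-lipschitz_on UNIV (pm k))"
    and p_bdd: "\<exists>c. \<forall>y. p y \<le> c"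
    and pm_bdd: "\<exists>c. \<forall>k>0. \<forall>y. pm k y \<le> c"
    \<comment> \<open>Condition D (ii)\<close>
    and pj_nonneg: "\<And>i z. 0 \<le> pj i z"
    and pj_dens: "\<And>i. i \<noteq> (\<lambda>_. 0) \<Longrightarrow>
        distributed M (lborel \<Otimes>\<^sub>M lborel) (\<lambda>\<omega>. (X (\<lambda>_. 0) \<omega>, X i \<omega>)) (\<lambda>z. ennreal (pj i z))"
    and pjm_nonneg: "\<And>i k z. 0 \<le> pjm i k z"
    and pjm_dens: "\<And>i k. i \<noteq> (\<lambda>_. 0) \<Longrightarrow> 0 < k \<Longrightarrow>
        distributed M (lborel \<Otimes>\<^sub>M lborel)
          (\<lambda>\<omega>. (X_trunc eps a k (\<lambda>_. 0) \<omega>, X_trunc eps a k i \<omega>)) (\<lambda>z. ennreal (pjm i k z))"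
    and pj_bdd: "\<exists>c. \<forall>i. i \<noteq> (\<lambda>_. 0) \<longrightarrow> (\<forall>z. pj i z \<le> c)"
    and pjm_bdd: "\<exists>c. \<forall>k>0. \<forall>i. i \<noteq> (\<lambda>_. 0) \<longrightarrow> (\<forall>z. pjm i k z \<le> c)"
  shows "\<exists>C. \<forall>n. L2_norm M (\<lambda>\<omega>.
            (K ((x - X_trunc eps a (m n) (\<lambda>_. 0) \<omega>) / b n) / sqrt (b n)
              - integral\<^sup>L M (\<lambda>\<omega>'. K ((x - X_trunc eps a (m n) (\<lambda>_. 0) \<omega>') / b n) / sqrt (b n)))
          - (K ((x - X (\<lambda>_. 0) \<omega>) / b n) / sqrt (b n)
              - integral\<^sup>L M (\<lambda>\<omega>'. K ((x - X (\<lambda>_. 0) \<omega>') / b n) / sqrt (b n))))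
         \<le> C * (sqrt (B_tail a (m n) / b n) + sqrt (b n))"
proof -
  interpret prob_space M by (rule M)
  obtain LK where LKl: "LK-lipschitz_on UNIV K" using K_lip by blast
  have LK0: "0 \<le> LK" using LKl by (simp add: lipschitz_on_def)
  have Kl: "\<bar>K u - K v\<bar> \<le> LK * \<bar>u - v\<bar>" for u v
    using LKl by (simp add: lipschitz_on_def dist_real_def)
  have Km[measurable]: "K \<in> borel_measurable borel"
    by (rule borel_measurable_continuous_onI[OF lipschitz_on_continuous_on[OF LKl]])
  obtain \<kappa> where K\<kappa>: "\<And>u. norm (K u) \<le> \<kappa>" using K_bdd by (auto simp: bounded_iff)
  have Kb: "K u \<le> \<kappa>" for u using K\<kappa>[of u] by simp
  have K1: "(\<integral>\<^sup>+u. ennreal (K u) \<partial>lborel) = 1"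
    using nn_integral_has_integral_lborel[OF Km K_nonneg K_int] by simp
  obtain cm where cm: "\<And>k y. 0 < k \<Longrightarrow> pm k y \<le> cm" using pm_bdd by blast
  define \<sigma>2 where "\<sigma>2 = (\<integral>\<omega>. (eps (\<lambda>_. 0) \<omega>)\<^sup>2 \<partial>M)"
  have \<sigma>0: "0 \<le> \<sigma>2" unfolding \<sigma>2_def by (intro integral_nonneg_AE) auto
  note eps_rv[measurable]
  have eps_int2: "integrable M (\<lambda>\<omega>. (eps i \<omega>)\<^sup>2)" for i
  proof -
    have "integrable (distr M borel (eps (\<lambda>_. 0))) (\<lambda>y::real. y\<^sup>2)"
      using eps_sq by (subst integrable_distr_eq) auto
    then have "integrable (distr M borel (eps i)) (\<lambda>y::real. y\<^sup>2)" by (simp add: eps_ident[of i])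
    then show ?thesis by (subst (asm) integrable_distr_eq) auto
  qed
  have eps_int: "integrable M (eps i)" for i
    by (rule square_integrable_imp_integrable) (auto intro: eps_int2)
  have eps_var: "(\<integral>\<omega>. (eps i \<omega>)\<^sup>2 \<partial>M) = \<sigma>2" for i
  proof -
    have "(\<integral>\<omega>. (eps i \<omega>)\<^sup>2 \<partial>M) = integral\<^sup>L (distr M borel (eps i)) (\<lambda>y::real. y\<^sup>2)"
      by (subst integral_distr) auto
    also have "\<dots> = integral\<^sup>L (distr M borel (eps (\<lambda>_. 0))) (\<lambda>y::real. y\<^sup>2)" by (simp add: eps_ident[of i])
    also have "\<dots> = \<sigma>2" unfolding \<sigma>2_def by (subst integral_distr) auto
    finally show ?thesis .
  qed
  have eps_m: "(\<integral>\<omega>. eps i \<omega> \<partial>M) = 0" for i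
  proof -
    have "(\<integral>\<omega>. eps i \<omega> \<partial>M) = integral\<^sup>L (distr M borel (eps i)) (\<lambda>y::real. y)"
      by (subst integral_distr) auto
    also have "\<dots> = integral\<^sup>L (distr M borel (eps (\<lambda>_. 0))) (\<lambda>y::real. y)" by (simp add: eps_ident[of i])
    also have "\<dots> = 0" using eps_mean by (subst integral_distr) auto
    finally show ?thesis .
  qed
  define C where "C = sqrt (2 * LK * cm * sqrt \<sigma>2)"
  define g0 :: "('d \<Rightarrow> int) \<Rightarrow> ('d \<Rightarrow> int)" where "g0 k = (\<lambda>\<tau>. - k \<tau>)" for k
  have g0inj: "inj g0" by (rule injI) (simp add: g0_def fun_eq_iff)
  have Xt: "X_trunc eps a N (\<lambda>_. 0) \<omega> = (\<Sum>k\<in>box_idx N. a k * eps (g0 k) \<omega>)" for N \<omega>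
    by (simp add: X_trunc_def g0_def)
  have Xtm[measurable]: "X_trunc eps a N (\<lambda>_. 0) \<in> borel_measurable M" for N
    unfolding Xt[abs_def] by measurable
  note X_rv[measurable]
  show ?thesis
  proof (intro exI allI)
    fix n
    define h where "h = b n"
    define mm where "mm = m n"
    have h0: "0 < h" using b_pos by (simp add: h_def)
    have mm0: "0 < mm" using m_pos by (simp add: mm_def)
    define T where "T = infsum (\<lambda>k. (a k)\<^sup>2) {k. nonneg_idx k \<and> sup_norm_idx k \<ge> int mm}"
    have BT: "B_tail a mm = sqrt T" by (simp add: B_tail_def T_def)
    define S where "S = X_trunc eps a mm (\<lambda>_. 0)"
    define X0 where "X0 = X (\<lambda>_. 0)"
    define XN where "XN N = X_trunc eps a N (\<lambda>_. 0)" for N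
    define DN where "DN N \<omega> = (\<Sum>k\<in>box_idx N - box_idx mm. a k * eps (g0 k) \<omega>)" for N \<omega>
    define f where "f y = K ((x - y) / h) / sqrt h" for y
    have Sm[measurable]: "S \<in> borel_measurable M" unfolding S_def by simp
    have X0m[measurable]: "X0 \<in> borel_measurable M" unfolding X0_def by simp
    have XNm[measurable]: "XN N \<in> borel_measurable M" for N unfolding XN_def by simp
    have DNm[measurable]: "DN N \<in> borel_measurable M" for N unfolding DN_def[abs_def] by measurable
    have fm[measurable]: "f \<in> borel_measurable borel" unfolding f_def[abs_def] by measurable
    have fb: "\<bar>f y\<bar> \<le> \<kappa> / sqrt h" for y
      using K_nonneg[of "(x - y) / h"] Kb[of "(x - y) / h"] h0 by (simp add: f_def divide_right_mono)
    have fl: "\<bar>f y - f z\<bar> \<le> LK / (h * sqrt h) * \<bar>y - z\<bar>" for y z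
    proof -
      have "\<bar>f y - f z\<bar> = \<bar>K ((x - y) / h) - K ((x - z) / h)\<bar> / sqrt h"
        using h0 by (simp add: f_def diff_divide_distrib[symmetric] abs_divide)
      also have "\<dots> \<le> LK * \<bar>(x - y) / h - (x - z) / h\<bar> / sqrt h"
        using h0 by (intro divide_right_mono Kl) auto
      also have "\<dots> = LK / (h * sqrt h) * \<bar>y - z\<bar>"
        using h0 by (simp add: diff_divide_distrib[symmetric] abs_divide field_simps abs_minus_commute)
      finally show ?thesis .
    qed
    have bint: "integrable M (\<lambda>\<omega>. (u \<omega>)\<^sup>2)" "integrable M u"
      if um: "u \<in> borel_measurable M" and ub: "\<And>\<omega>. \<bar>u \<omega>\<bar> \<le> B" for u :: "'a \<Rightarrow> real" and B
    proof -
      show "integrable M u"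
        by (rule integrable_const_bound[where B=B]) (use ub um in auto)
      have "\<bar>u \<omega>\<bar>\<^sup>2 \<le> B\<^sup>2" for \<omega> using ub[of \<omega>] by (intro power_mono) auto
      then show "integrable M (\<lambda>\<omega>. (u \<omega>)\<^sup>2)"
        by (intro integrable_const_bound[where B="B\<^sup>2"]) (use um in auto)
    qed
    define G where "G \<omega> = f (S \<omega>) - f (X0 \<omega>)" for \<omega>
    have Gm[measurable]: "G \<in> borel_measurable M" unfolding G_def[abs_def] by measurable
    have Gb: "\<bar>G \<omega>\<bar> \<le> 2 * (\<kappa> / sqrt h)" for \<omega>
      using fb[of "S \<omega>"] fb[of "X0 \<omega>"] by (simp add: G_def)
    note G2 = bint[OF Gm Gb]
    have fSi: "integrable M (\<lambda>\<omega>. f (S \<omega>))" using bint(2)[of "\<lambda>\<omega>. f (S \<omega>)", OF _ fb] by simp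
    have fXi: "integrable M (\<lambda>\<omega>. f (X0 \<omega>))" using bint(2)[of "\<lambda>\<omega>. f (X0 \<omega>)", OF _ fb] by simp
    have key: "sqrt (\<integral>\<omega>. (G \<omega>)\<^sup>2 \<partial>M) \<le> C * sqrt (sqrt T / h)"
    proof -
      define e where "e N = sqrt (\<integral>\<omega>. (X (\<lambda>_. 0) \<omega> - X_trunc eps a N (\<lambda>_. 0) \<omega>)\<^sup>2 \<partial>M)" for N
      have e0: "e \<longlonglongrightarrow> 0"
        unfolding e_def using tendsto_real_sqrt[OF X_lim[of "\<lambda>_. 0"]] by simp
      have bnd: "sqrt (\<integral>\<omega>. (G \<omega>)\<^sup>2 \<partial>M) \<le> C * sqrt (sqrt T / h) + LK / (h * sqrt h) * e N"
        if N: "mm \<le> N" for N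
      proof -
        have sub: "box_idx mm \<subseteq> box_idx N" by (rule box_mono[OF N])
        have XNS: "XN N \<omega> = S \<omega> + DN N \<omega>" for \<omega>
          unfolding XN_def S_def DN_def Xt
          using sum.subset_diff[OF sub box_finite, of "\<lambda>k. a k * eps (g0 k) \<omega>"] by simp
        have DN2: "integrable M (\<lambda>\<omega>. (DN N \<omega>)\<^sup>2)"
          unfolding DN_def by (rule lin_comb_sq_int[where e=eps and g=g0]) (auto intro: eps_int2)
        have EDN: "(\<integral>\<omega>. (DN N \<omega>)\<^sup>2 \<partial>M) = \<sigma>2 * (\<Sum>k\<in>box_idx N - box_idx mm. (a k)\<^sup>2)"
          unfolding DN_def
          by (rule lin_comb_sq[where g=g0, OF eps_indep _ eps_int2 eps_m eps_var])
             (auto intro: box_finite inj_on_subset[OF g0inj])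
        have sumT: "(\<Sum>k\<in>box_idx N - box_idx mm. (a k)\<^sup>2) \<le> T"
          unfolding T_def
        proof (rule finite_sum_le_infsum)
          show "(\<lambda>k. (a k)\<^sup>2) summable_on {k. nonneg_idx k \<and> int mm \<le> sup_norm_idx k}"
            by (rule summable_on_subset_banach[OF a_sq]) auto
        qed (simp_all add: box_finite box_diff_tail)
        have sqDN: "sqrt (\<integral>\<omega>. (DN N \<omega>)\<^sup>2 \<partial>M) \<le> sqrt \<sigma>2 * sqrt T"
          unfolding EDN real_sqrt_mult[symmetric]
          by (intro real_sqrt_le_mono mult_left_mono sumT \<sigma>0)
        define A1 where "A1 = g0 ` box_idx mm"
        define A2 where "A2 = g0 ` (box_idx N - box_idx mm)"
        have A12: "A1 \<inter> A2 = {}" unfolding A1_def A2_def using g0inj by (auto simp: inj_def)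
        have ind0: "indep_var (PiM A1 (\<lambda>_. borel)) (\<lambda>\<omega>. restrict (\<lambda>i. eps i \<omega>) A1)
                              (PiM A2 (\<lambda>_. borel)) (\<lambda>\<omega>. restrict (\<lambda>i. eps i \<omega>) A2)"
          by (rule indep_var_restrict[OF eps_indep A12]) auto
        have Y1m: "(\<lambda>F. \<Sum>k\<in>box_idx mm. a k * F (g0 k)) \<in> measurable (PiM A1 (\<lambda>_. borel)) lborel"
          unfolding measurable_lborel1
        proof (rule borel_measurable_sum)
          fix k :: "'d \<Rightarrow> int" assume "k \<in> box_idx mm"
          then have "g0 k \<in> A1" by (simp add: A1_def)
          from measurable_component_singleton[OF this, of "\<lambda>_. borel"]
          have [measurable]: "(\<lambda>F. F (g0 k)) \<in> borel_measurable (PiM A1 (\<lambda>_. borel))" .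
          show "(\<lambda>F. a k * F (g0 k)) \<in> borel_measurable (PiM A1 (\<lambda>_. (borel::real measure)))" by measurable
        qed
        have Y2m: "(\<lambda>F. \<Sum>k\<in>box_idx N - box_idx mm. a k * F (g0 k)) \<in> measurable (PiM A2 (\<lambda>_. borel)) lborel"
          unfolding measurable_lborel1
        proof (rule borel_measurable_sum)
          fix k :: "'d \<Rightarrow> int" assume "k \<in> box_idx N - box_idx mm"
          then have "g0 k \<in> A2" by (simp add: A2_def)
          from measurable_component_singleton[OF this, of "\<lambda>_. borel"]
          have [measurable]: "(\<lambda>F. F (g0 k)) \<in> borel_measurable (PiM A2 (\<lambda>_. borel))" .
          show "(\<lambda>F. a k * F (g0 k)) \<in> borel_measurable (PiM A2 (\<lambda>_. (borel::real measure)))" by measurable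
        qed
        have ind1: "indep_var lborel ((\<lambda>F. \<Sum>k\<in>box_idx mm. a k * F (g0 k)) \<circ> (\<lambda>\<omega>. restrict (\<lambda>i. eps i \<omega>) A1))
                              lborel ((\<lambda>F. \<Sum>k\<in>box_idx N - box_idx mm. a k * F (g0 k)) \<circ> (\<lambda>\<omega>. restrict (\<lambda>i. eps i \<omega>) A2))"
          by (rule indep_var_compose[OF ind0 Y1m Y2m])
        have c1: "((\<lambda>F. \<Sum>k\<in>box_idx mm. a k * F (g0 k)) \<circ> (\<lambda>\<omega>. restrict (\<lambda>i. eps i \<omega>) A1)) = S"
          by (auto simp: S_def Xt A1_def intro!: ext sum.cong)
        have c2: "((\<lambda>F. \<Sum>k\<in>box_idx N - box_idx mm. a k * F (g0 k)) \<circ> (\<lambda>\<omega>. restrict (\<lambda>i. eps i \<omega>) A2)) = DN N"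
          by (auto simp: DN_def A2_def intro!: ext sum.cong)
        have ind: "indep_var lborel S lborel (DN N)" using ind1 unfolding c1 c2 .
        have dS: "distributed M lborel S (\<lambda>y. ennreal (pm mm y))"
          unfolding S_def by (rule pm_dens[OF mm0])
        have mf: "(\<integral>\<omega>. (K ((x - S \<omega>) / h) / sqrt h - K ((x - S \<omega> - DN N \<omega>) / h) / sqrt h)\<^sup>2 \<partial>M)
           \<le> 2 * LK * cm * sqrt (\<integral>\<omega>. (DN N \<omega>)\<^sup>2 \<partial>M) / h"
          by (rule main_finite[OF ind dS cm[OF mm0] pm_nonneg Km K_nonneg Kb Kl K1 h0 LK0 DN2])
        have t1: "(\<integral>\<omega>. (f (S \<omega>) - f (XN N \<omega>))\<^sup>2 \<partial>M) \<le> (2 * LK * cm * sqrt \<sigma>2) * (sqrt T / h)"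
        proof -
          have "(\<integral>\<omega>. (f (S \<omega>) - f (XN N \<omega>))\<^sup>2 \<partial>M)
             = (\<integral>\<omega>. (K ((x - S \<omega>) / h) / sqrt h - K ((x - S \<omega> - DN N \<omega>) / h) / sqrt h)\<^sup>2 \<partial>M)"
            by (intro Bochner_Integration.integral_cong refl) (simp add: f_def XNS diff_diff_eq)
          also note mf
          also have "2 * LK * cm * sqrt (\<integral>\<omega>. (DN N \<omega>)\<^sup>2 \<partial>M) / h \<le> 2 * LK * cm * (sqrt \<sigma>2 * sqrt T) / h"
            using h0 LK0 cm[OF mm0, of 0] pm_nonneg[of mm 0]
            by (intro divide_right_mono mult_left_mono sqDN) auto
          also have "\<dots> = (2 * LK * cm * sqrt \<sigma>2) * (sqrt T / h)" by simp
          finally show ?thesis .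
        qed
        have u1m: "(\<lambda>\<omega>. f (S \<omega>) - f (XN N \<omega>)) \<in> borel_measurable M" by measurable
        have u2m: "(\<lambda>\<omega>. f (XN N \<omega>) - f (X0 \<omega>)) \<in> borel_measurable M" by measurable
        have u1b: "\<bar>f (S \<omega>) - f (XN N \<omega>)\<bar> \<le> 2 * (\<kappa> / sqrt h)" for \<omega>
          using fb[of "S \<omega>"] fb[of "XN N \<omega>"] by simp
        have u2b: "\<bar>f (XN N \<omega>) - f (X0 \<omega>)\<bar> \<le> 2 * (\<kappa> / sqrt h)" for \<omega>
          using fb[of "X0 \<omega>"] fb[of "XN N \<omega>"] by simp
        have mk: "sqrt (\<integral>\<omega>. ((f (S \<omega>) - f (XN N \<omega>)) + (f (XN N \<omega>) - f (X0 \<omega>)))\<^sup>2 \<partial>M)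
            \<le> sqrt (\<integral>\<omega>. (f (S \<omega>) - f (XN N \<omega>))\<^sup>2 \<partial>M) + sqrt (\<integral>\<omega>. (f (XN N \<omega>) - f (X0 \<omega>))\<^sup>2 \<partial>M)"
          by (rule minkowski_real[OF u1m u2m bint(1)[OF u1m u1b] bint(1)[OF u2m u2b]])
        have Ge: "(\<integral>\<omega>. (G \<omega>)\<^sup>2 \<partial>M) = (\<integral>\<omega>. ((f (S \<omega>) - f (XN N \<omega>)) + (f (XN N \<omega>) - f (X0 \<omega>)))\<^sup>2 \<partial>M)"
          by (simp add: G_def)
        have s1: "sqrt (\<integral>\<omega>. (f (S \<omega>) - f (XN N \<omega>))\<^sup>2 \<partial>M) \<le> C * sqrt (sqrt T / h)"
          unfolding C_def real_sqrt_mult[symmetric] by (rule real_sqrt_le_mono[OF t1])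
        have t2: "(\<integral>\<omega>. (f (XN N \<omega>) - f (X0 \<omega>))\<^sup>2 \<partial>M)
             \<le> (LK / (h * sqrt h))\<^sup>2 * (\<integral>\<omega>. (X (\<lambda>_. 0) \<omega> - X_trunc eps a N (\<lambda>_. 0) \<omega>)\<^sup>2 \<partial>M)"
        proof -
          have pw: "(f (XN N \<omega>) - f (X0 \<omega>))\<^sup>2 \<le> (LK / (h * sqrt h))\<^sup>2 * (X (\<lambda>_. 0) \<omega> - X_trunc eps a N (\<lambda>_. 0) \<omega>)\<^sup>2" for \<omega>
          proof -
            have "\<bar>f (XN N \<omega>) - f (X0 \<omega>)\<bar> \<le> LK / (h * sqrt h) * \<bar>X (\<lambda>_. 0) \<omega> - X_trunc eps a N (\<lambda>_. 0) \<omega>\<bar>"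
              using fl[of "XN N \<omega>" "X0 \<omega>"] by (simp add: XN_def X0_def abs_minus_commute)
            then have "\<bar>f (XN N \<omega>) - f (X0 \<omega>)\<bar>\<^sup>2 \<le> (LK / (h * sqrt h) * \<bar>X (\<lambda>_. 0) \<omega> - X_trunc eps a N (\<lambda>_. 0) \<omega>\<bar>)\<^sup>2"
              by (intro power_mono) auto
            then show ?thesis by (simp only: power_mult_distrib power2_abs)
          qed
          have "integrable M (\<lambda>\<omega>. (X (\<lambda>_. 0) \<omega> - X_trunc eps a N (\<lambda>_. 0) \<omega>)\<^sup>2)"
          proof -
            have iX: "integrable M (\<lambda>\<omega>. (X (\<lambda>_. 0) \<omega>)\<^sup>2)" by (rule X_sq)
            have iT: "integrable M (\<lambda>\<omega>. (X_trunc eps a N (\<lambda>_. 0) \<omega>)\<^sup>2)"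
              unfolding Xt by (rule lin_comb_sq_int[where e=eps and g=g0]) (auto intro: eps_int2)
            have "integrable M (\<lambda>\<omega>. (X (\<lambda>_. 0) \<omega>) * (X_trunc eps a N (\<lambda>_. 0) \<omega>))"
              by (rule cs_real(1)[OF _ _ iX iT]) auto
            then have i3: "integrable M (\<lambda>\<omega>. 2 * X (\<lambda>_. 0) \<omega> * X_trunc eps a N (\<lambda>_. 0) \<omega>)"
              by (simp add: mult.assoc)
            show ?thesis unfolding power2_diff
              by (rule Bochner_Integration.integrable_diff[OF Bochner_Integration.integrable_add[OF iX iT] i3])
          qed
          then show ?thesis
            using bint(1)[OF u2m u2b] pw by (subst integral_mult_right_zero[symmetric]) (rule integral_mono, auto)
        qed
        have s2: "sqrt (\<integral>\<omega>. (f (XN N \<omega>) - f (X0 \<omega>))\<^sup>2 \<partial>M) \<le> LK / (h * sqrt h) * e N"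
        proof -
          have "sqrt (\<integral>\<omega>. (f (XN N \<omega>) - f (X0 \<omega>))\<^sup>2 \<partial>M)
             \<le> sqrt ((LK / (h * sqrt h))\<^sup>2 * (\<integral>\<omega>. (X (\<lambda>_. 0) \<omega> - X_trunc eps a N (\<lambda>_. 0) \<omega>)\<^sup>2 \<partial>M))"
            by (rule real_sqrt_le_mono[OF t2])
          also have "\<dots> = LK / (h * sqrt h) * e N"
            using LK0 h0 by (simp add: e_def real_sqrt_mult)
          finally show ?thesis .
        qed
        show ?thesis using mk s1 s2 unfolding Ge by linarith
      qed
      have lim0: "(\<lambda>N. C * sqrt (sqrt T / h) + LK / (h * sqrt h) * e N) \<longlonglongrightarrow> C * sqrt (sqrt T / h) + LK / (h * sqrt h) * 0"
        by (intro tendsto_intros e0)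
      then have lim: "(\<lambda>N. C * sqrt (sqrt T / h) + LK / (h * sqrt h) * e N) \<longlonglongrightarrow> C * sqrt (sqrt T / h)"
        by simp
      show ?thesis
      proof (rule tendsto_le[OF trivial_limit_sequentially lim tendsto_const])
        show "\<forall>\<^sub>F N in sequentially. sqrt (\<integral>\<omega>. (G \<omega>)\<^sup>2 \<partial>M) \<le> C * sqrt (sqrt T / h) + LK / (h * sqrt h) * e N"
          unfolding eventually_sequentially using bnd by blast
      qed
    qed
    have eqL: "L2_norm M (\<lambda>\<omega>.
            (K ((x - X_trunc eps a (m n) (\<lambda>_. 0) \<omega>) / b n) / sqrt (b n)
              - integral\<^sup>L M (\<lambda>\<omega>'. K ((x - X_trunc eps a (m n) (\<lambda>_. 0) \<omega>') / b n) / sqrt (b n)))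
          - (K ((x - X (\<lambda>_. 0) \<omega>) / b n) / sqrt (b n)
              - integral\<^sup>L M (\<lambda>\<omega>'. K ((x - X (\<lambda>_. 0) \<omega>') / b n) / sqrt (b n))))
          = sqrt (\<integral>\<omega>. (G \<omega> - (\<integral>\<omega>'. G \<omega>' \<partial>M))\<^sup>2 \<partial>M)"
    proof -
      have iG: "(\<integral>\<omega>'. G \<omega>' \<partial>M) = (\<integral>\<omega>'. f (S \<omega>') \<partial>M) - (\<integral>\<omega>'. f (X0 \<omega>') \<partial>M)"
        unfolding G_def using fSi fXi by simp
      show ?thesis unfolding L2_norm_def iG
        by (rule arg_cong[where f=sqrt], rule Bochner_Integration.integral_cong[OF refl])
           (simp add: G_def f_def S_def X0_def h_def mm_def algebra_simps)
    qed
    have "L2_norm M (\<lambda>\<omega>.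
            (K ((x - X_trunc eps a (m n) (\<lambda>_. 0) \<omega>) / b n) / sqrt (b n)
              - integral\<^sup>L M (\<lambda>\<omega>'. K ((x - X_trunc eps a (m n) (\<lambda>_. 0) \<omega>') / b n) / sqrt (b n)))
          - (K ((x - X (\<lambda>_. 0) \<omega>) / b n) / sqrt (b n)
              - integral\<^sup>L M (\<lambda>\<omega>'. K ((x - X (\<lambda>_. 0) \<omega>') / b n) / sqrt (b n))))
          \<le> sqrt (\<integral>\<omega>. (G \<omega>)\<^sup>2 \<partial>M)"
      unfolding eqL by (rule real_sqrt_le_mono[OF variance_le[OF Gm G2(1)]])
    also note key
    also have "C * sqrt (sqrt T / h) \<le> C * (sqrt (B_tail a (m n) / b n) + sqrt (b n))"
      unfolding C_def BT[unfolded mm_def] h_def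
      using b_pos[of n] LK0 cm[OF mm0, of 0] pm_nonneg[of mm 0] \<sigma>0
      by (intro mult_left_mono) (auto intro!: mult_nonneg_nonneg)
    finally show "L2_norm M (\<lambda>\<omega>.
            (K ((x - X_trunc eps a (m n) (\<lambda>_. 0) \<omega>) / b n) / sqrt (b n)
              - integral\<^sup>L M (\<lambda>\<omega>'. K ((x - X_trunc eps a (m n) (\<lambda>_. 0) \<omega>') / b n) / sqrt (b n)))
          - (K ((x - X (\<lambda>_. 0) \<omega>) / b n) / sqrt (b n)
              - integral\<^sup>L M (\<lambda>\<omega>'. K ((x - X (\<lambda>_. 0) \<omega>') / b n) / sqrt (b n))))
         \<le> C * (sqrt (B_tail a (m n) / b n) + sqrt (b n))" .
  qed
qed


end
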